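(* Let $d \geq 2$, $n \geq 1$, $\varphi(t) = \frac12 t^2$ and $w_{ij} = 1$ for all $i,j$. If $X \in \mathcal{M}$ is a critical point of $f(X) = \frac14\|X^\top X\|_F^2$ at which the Riemannian Hessian is negative semidefinite, then $x_i^\top x_j \neq 0$ for all $i, j$.
   Context: $\mathcal{M} = (\mathbb{S}^{d-1})^n$ is the set of $X \in \mathbb{R}^{d\times n}$ with unit-norm columns $x_1,\dots,x_n$, a Riemannian submanifold of $\mathbb{R}^{d\times n}$ with the Frobenius metric; gradient and Hessian are Riemannian. *)

theory Defs
  imports "HOL-Analysis.Analysis"
begin

text \<open>A point X of M = (S^{d-1})^n is represented as X :: real^'d^'n, the column
  x_i being X $ i :: real^'d.\<close>

definition on_M :: "real^'d^'n \<Rightarrow> bool" where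
  "on_M X \<longleftrightarrow> (\<forall>i. norm (X $ i) = 1)"

definition tangent_M :: "real^'d^'n \<Rightarrow> real^'d^'n \<Rightarrow> bool" where
  "tangent_M X V \<longleftrightarrow> (\<forall>i. X $ i \<bullet> V $ i = 0)"

definition geod_M :: "real^'d^'n \<Rightarrow> real^'d^'n \<Rightarrow> real \<Rightarrow> real^'d^'n" where
  "geod_M X V t = (\<chi> i. cos (t * norm (V $ i)) *\<^sub>R X $ i
                       + sin (t * norm (V $ i)) *\<^sub>R ((1 / norm (V $ i)) *\<^sub>R V $ i))"

text \<open>Riemannian gradient paired with a tangent vector V: <grad f(X), V> is the derivative
  of f along the geodesic; the Riemannian Hessian quadratic form Hess f(X)[V,V] is the
  second derivative of f along the geodesic.\<close>
definition riem_dir_deriv :: "(real^'d^'n \<Rightarrow> real) \<Rightarrow> real^'d^'n \<Rightarrow> real^'d^'n \<Rightarrow> real" where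
  "riem_dir_deriv f X V = deriv (\<lambda>t. f (geod_M X V t)) 0"

definition riem_hess_form :: "(real^'d^'n \<Rightarrow> real) \<Rightarrow> real^'d^'n \<Rightarrow> real^'d^'n \<Rightarrow> real" where
  "riem_hess_form f X V = deriv (deriv (\<lambda>t. f (geod_M X V t))) 0"

definition riem_critical :: "(real^'d^'n \<Rightarrow> real) \<Rightarrow> real^'d^'n \<Rightarrow> bool" where
  "riem_critical f X \<longleftrightarrow> on_M X \<and> (\<forall>V. tangent_M X V \<longrightarrow> riem_dir_deriv f X V = 0)"

definition riem_hess_nsd :: "(real^'d^'n \<Rightarrow> real) \<Rightarrow> real^'d^'n \<Rightarrow> bool" where
  "riem_hess_nsd f X \<longleftrightarrow> (\<forall>V. tangent_M X V \<longrightarrow> riem_hess_form f X V \<le> 0)"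

definition f_energy :: "real^'d^'n \<Rightarrow> real" where
  "f_energy X = (1/4) * (\<Sum>i\<in>UNIV. \<Sum>j\<in>UNIV. (X $ i \<bullet> X $ j)\<^sup>2)"

end

theory Submission
  imports Defs
begin

lemma f_split:
  fixes X :: "real^'d^'n"
  shows "f_energy (\<chi> k. if k = i then y else X$k) =
     1/4 * (\<Sum>k\<in>-{i}. \<Sum>l\<in>-{i}. (X$k \<bullet> X$l)\<^sup>2) + 1/2 * (\<Sum>k\<in>-{i}. (y \<bullet> X$k)\<^sup>2) + 1/4 * (y \<bullet> y)\<^sup>2"
proof -
  let ?Y = "(\<chi> k. if k = i then y else X$k) :: real^'d^'n"
  have r: "\<And>g::'n\<Rightarrow>real. sum g UNIV = g i + sum g (-{i})"
    by (metis Compl_eq_Diff_UNIV finite sum.remove UNIV_I)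
  have "(\<Sum>k\<in>UNIV. \<Sum>l\<in>UNIV. (?Y$k \<bullet> ?Y$l)\<^sup>2)
      = (\<Sum>k\<in>UNIV. (?Y$k \<bullet> y)\<^sup>2 + (\<Sum>l\<in>-{i}. (?Y$k \<bullet> X$l)\<^sup>2))"
    by (subst r) simp
  also have "\<dots> = (y \<bullet> y)\<^sup>2 + (\<Sum>l\<in>-{i}. (y \<bullet> X$l)\<^sup>2) +
      (\<Sum>k\<in>-{i}. (X$k \<bullet> y)\<^sup>2 + (\<Sum>l\<in>-{i}. (X$k \<bullet> X$l)\<^sup>2))"
    by (subst r) simp
  also have "\<dots> = (y \<bullet> y)\<^sup>2 + 2 * (\<Sum>l\<in>-{i}. (y \<bullet> X$l)\<^sup>2) +
      (\<Sum>k\<in>-{i}. (\<Sum>l\<in>-{i}. (X$k \<bullet> X$l)\<^sup>2))"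
    by (simp add: sum.distrib inner_commute)
  finally show ?thesis unfolding f_energy_def by simp
qed

lemma trig_deriv2:
  fixes K P Q R :: real
  shows "deriv (deriv (\<lambda>t. K + P * (cos t)\<^sup>2 + Q * (sin t * cos t) + R * (sin t)\<^sup>2)) 0 = 2*R - 2*P"
proof -
  have d1: "deriv (\<lambda>t. K + P * (cos t)\<^sup>2 + Q * (sin t * cos t) + R * (sin t)\<^sup>2)
     = (\<lambda>t. P * (2 * cos t * (- sin t)) + Q * (cos t * cos t - sin t * sin t) + R * (2 * sin t * cos t))"
  proof
    fix t :: real
    have "((\<lambda>t. K + P * (cos t)\<^sup>2 + Q * (sin t * cos t) + R * (sin t)\<^sup>2) has_real_derivative
      P * (2 * cos t * (- sin t)) + Q * (cos t * cos t - sin t * sin t) + R * (2 * sin t * cos t)) (at t)"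
      by (auto intro!: derivative_eq_intros simp: power2_eq_square algebra_simps)
    then show "deriv (\<lambda>t. K + P * (cos t)\<^sup>2 + Q * (sin t * cos t) + R * (sin t)\<^sup>2) t =
      P * (2 * cos t * (- sin t)) + Q * (cos t * cos t - sin t * sin t) + R * (2 * sin t * cos t)"
      by (rule DERIV_imp_deriv)
  qed
  have "((\<lambda>t. P * (2 * cos t * (- sin t)) + Q * (cos t * cos t - sin t * sin t) + R * (2 * sin t * cos t))
     has_real_derivative 2*R - 2*P) (at 0)"
    by (auto intro!: derivative_eq_intros)
  then show ?thesis unfolding d1 by (rule DERIV_imp_deriv)
qed

lemma hess_pair:
  fixes X :: "real^'d^'n"
  assumes M: "on_M X" and ij: "X$i \<bullet> X$j = 0" and neq: "i \<noteq> j"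
  shows "riem_hess_form f_energy X (\<chi> k. if k = i then X$j else 0) =
     (\<Sum>k\<in>-{i}. (X$j \<bullet> X$k)\<^sup>2) - (\<Sum>k\<in>-{i}. (X$i \<bullet> X$k)\<^sup>2)"
proof -
  let ?V = "(\<chi> k. if k = i then X$j else 0) :: real^'d^'n"
  have nj: "norm (X$j) = 1" and ni: "norm (X$i) = 1" using M by (auto simp: on_M_def)
  have sj: "X$j \<bullet> X$j = 1" and si: "X$i \<bullet> X$i = 1"
    using nj ni by (metis power2_norm_eq_inner power_one)+
  have g: "geod_M X ?V t = (\<chi> k. if k = i then cos t *\<^sub>R X$i + sin t *\<^sub>R X$j else X$k)" for t
    by (simp add: geod_M_def vec_eq_iff nj)
  define K where "K = 1/4 * (\<Sum>k\<in>-{i}. \<Sum>l\<in>-{i}. (X$k \<bullet> X$l)\<^sup>2) + 1/4"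
  define P where "P = 1/2 * (\<Sum>k\<in>-{i}. (X$i \<bullet> X$k)\<^sup>2)"
  define Q where "Q = (\<Sum>k\<in>-{i}. (X$i \<bullet> X$k) * (X$j \<bullet> X$k))"
  define R where "R = 1/2 * (\<Sum>k\<in>-{i}. (X$j \<bullet> X$k)\<^sup>2)"
  have e: "f_energy (geod_M X ?V t) = K + P * (cos t)\<^sup>2 + Q * (sin t * cos t) + R * (sin t)\<^sup>2" for t
  proof -
    have yy: "(cos t *\<^sub>R X$i + sin t *\<^sub>R X$j) \<bullet> (cos t *\<^sub>R X$i + sin t *\<^sub>R X$j) = 1"
      by (simp add: inner_add_left inner_add_right inner_commute ij si sj sin_cos_squared_add3 flip: power2_eq_square)
    have "(\<Sum>k\<in>-{i}. ((cos t *\<^sub>R X$i + sin t *\<^sub>R X$j) \<bullet> X$k)\<^sup>2)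
        = (\<Sum>k\<in>-{i}. (cos t)\<^sup>2 * (X$i \<bullet> X$k)\<^sup>2 + 2 * (sin t * cos t) * ((X$i \<bullet> X$k) * (X$j \<bullet> X$k)) + (sin t)\<^sup>2 * (X$j \<bullet> X$k)\<^sup>2)"
      by (rule sum.cong) (auto simp: inner_add_left power2_eq_square algebra_simps)
    also have "\<dots> = (cos t)\<^sup>2 * (2*P) + 2 * (sin t * cos t) * Q + (sin t)\<^sup>2 * (2*R)"
      by (simp add: sum.distrib sum_distrib_left P_def Q_def R_def)
    finally show ?thesis unfolding g f_split yy K_def by (simp add: algebra_simps)
  qed
  have "riem_hess_form f_energy X ?V = 2*R - 2*P"
    unfolding riem_hess_form_def e by (rule trig_deriv2)
  then show ?thesis by (simp add: P_def R_def)
qed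

lemma sum_minus_one:
  fixes g :: "'n::finite \<Rightarrow> real"
  shows "(\<Sum>k\<in>-{i}. g k) = (\<Sum>k\<in>UNIV. g k) - g i"
  by (metis Compl_eq_Diff_UNIV finite sum.remove UNIV_I add_diff_cancel_left')

theorem mainTheorem17:
  fixes X :: "real^'d^'n"
  assumes "CARD('d) \<ge> 2"
    and "on_M X"
    and "riem_critical f_energy X"
    and "riem_hess_nsd f_energy X"
  shows "\<forall>i j. X $ i \<bullet> X $ j \<noteq> 0"
proof (intro allI notI)
  fix i j
  assume ij: "X $ i \<bullet> X $ j = 0"
  have n1: "\<And>k. X$k \<bullet> X$k = 1" using assms(2)
    by (metis on_M_def power2_norm_eq_inner power_one)
  have neq: "i \<noteq> j" using ij n1 by auto
  have ji: "X $ j \<bullet> X $ i = 0" using ij by (simp add: inner_commute)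
  have t1: "tangent_M X (\<chi> k. if k = i then X$j else 0)"
    by (simp add: tangent_M_def ij)
  have t2: "tangent_M X (\<chi> k. if k = j then X$i else 0)"
    by (simp add: tangent_M_def ji)
  have h1: "(\<Sum>k\<in>-{i}. (X$j \<bullet> X$k)\<^sup>2) - (\<Sum>k\<in>-{i}. (X$i \<bullet> X$k)\<^sup>2) \<le> 0"
    using assms(4) t1 hess_pair[OF assms(2) ij neq] unfolding riem_hess_nsd_def by metis
  have h2: "(\<Sum>k\<in>-{j}. (X$i \<bullet> X$k)\<^sup>2) - (\<Sum>k\<in>-{j}. (X$j \<bullet> X$k)\<^sup>2) \<le> 0"
    using assms(4) t2 hess_pair[OF assms(2) ji neq[symmetric]] unfolding riem_hess_nsd_def by metis
  show False using h1 h2 unfolding sum_minus_one by (simp add: n1 ij ji)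
qed

end
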